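(* For any $m>8\pi$ there exist $\varepsilon>0$ and $\ell>0$ such that, with $\tau(t):=\varepsilon-\ell t$ and $a(t):=4e^{\tau(t)}$ for $t\in(0,\varepsilon/\ell)$, the function $$\underline M(\rho,t):=\frac{a(t)\rho}{\rho+\tau(t)^3},\qquad(\rho,t)\in[0,1]\times[0,\varepsilon/\ell),$$ satisfies $$\sup_{t\in(0,\varepsilon/\ell)}\underline M(1,t)<\frac{m}{2\pi},\qquad \inf_{\rho\in(0,1)}\underline M_\rho(\rho,t)>0\ \text{ for all }t\in[0,\varepsilon/\ell),$$ and $$\Theta\underline M\le0\quad\text{for all }\rho\in(0,1),\ t\in(0,\varepsilon/\ell).$$ In particular $\underline M(0,t)=0$ for all $t\in(0,\varepsilon/\ell)$, while $\underline M(\rho,t)\to4$ as $t\uparrow\varepsilon/\ell$ for every $\rho\in(0,1]$.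
   Context: For $T>0$ and $f\in C^{2,1}((0,1)\times(0,T))$ the operator $\Theta$ is defined by $$\Theta f:=f_t-4\rho f_{\rho\rho}-2f_\rho\Big(f-\frac{m\rho}{2\pi}\Big).$$ *)

theory Defs
  imports "HOL-Analysis.Analysis"
begin

definition Theta :: "real \<Rightarrow> (real \<Rightarrow> real \<Rightarrow> real) \<Rightarrow> real \<Rightarrow> real \<Rightarrow> real" where
  "Theta m f \<rho> t =
     deriv (\<lambda>s. f \<rho> s) t
     - 4 * \<rho> * deriv (\<lambda>r. deriv (\<lambda>q. f q t) r) \<rho>
     - 2 * deriv (\<lambda>r. f r t) \<rho> * (f \<rho> t - m * \<rho> / (2 * pi))"

end

theory Submission
  imports Defs
begin
lemma aux1: "(D::real) \<noteq> 0 \<Longrightarrow> (A * D - A * r) / (D * D) = A * (D - r) / D^2"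
  by (simp add: power2_eq_square algebra_simps)
lemma aux2: "(D::real) \<noteq> 0 \<Longrightarrow> A * c * (2 * D) / D ^ 4 = 2 * A * c / D ^ 3"
  by (simp add: field_simps eval_nat_numeral)
lemma aux3: "(D::real) \<noteq> 0 \<Longrightarrow> (12 * (E * (\<rho> * q)) - E * 4 * \<rho> * D) / (D * D) = 12 * E * \<rho> * q / D^2 - 4 * E * \<rho> / D"
  by (simp add: field_simps power2_eq_square)
lemma dr1:
  fixes A c r :: real
  assumes "r + c \<noteq> 0"
  shows "((\<lambda>r. A * r / (r + c)) has_real_derivative A * c / (r + c)^2) (at r)"
  using assms apply (auto intro!: derivative_eq_intros)
  using aux1[of "r+c" A r] assms apply simp
  done
lemma dr2:
  fixes A c r :: real
  assumes "r + c \<noteq> 0"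
  shows "((\<lambda>r. A * c / (r + c)^2) has_real_derivative - 2 * A * c / (r + c)^3) (at r)"
  using assms apply (auto intro!: derivative_eq_intros)
  using aux2[of "r+c" A c] assms by (simp add: algebra_simps)
lemma dt:
  fixes e \<rho> t :: real
  assumes "\<rho> + (e - 1 * t)^3 \<noteq> 0"
  shows "((\<lambda>s. 4 * exp (e - 1 * s) * \<rho> / (\<rho> + (e - 1 * s)^3)) has_real_derivative
     - (4 * exp (e - t)) * \<rho> / (\<rho> + (e - t)^3)
     + 3 * (4 * exp (e - t)) * \<rho> * (e - t)^2 / (\<rho> + (e - t)^3)^2) (at t)"
  using assms apply (auto intro!: derivative_eq_intros)
  using aux3[of "\<rho> + (e - t)^3" "exp (e-t)" \<rho> "(e-t)^2"] assms by simp

lemma alg: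
  fixes \<tau> \<rho> m A :: real
  assumes "\<tau> > 0" "\<rho> > 0" "A \<ge> 4 * (1 + \<tau>)" "(m / pi) * \<tau> \<le> 1"
  shows "- A * \<rho> / (\<rho> + \<tau>^3) + 3 * A * \<rho> * \<tau>^2 / (\<rho> + \<tau>^3)^2
     - 4 * \<rho> * (- 2 * A * \<tau>^3 / (\<rho> + \<tau>^3)^3)
     - 2 * (A * \<tau>^3 / (\<rho> + \<tau>^3)^2) * (A * \<rho> / (\<rho> + \<tau>^3) - m * \<rho> / (2 * pi)) \<le> 0"
proof -
  define Dd where "Dd = \<rho> + \<tau>^3"
  have "\<tau>^3 > 0" using assms by simp
  hence Dp: "Dd > 0" using assms unfolding Dd_def by linarith
  define B where "B = (- (Dd^2)) + 3 * \<tau>^2 * Dd + 8 * \<tau>^3 - 2 * A * \<tau>^3 + ((m / pi) * \<tau>) * \<tau>^2 * Dd"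
  have eq: "- A * \<rho> / Dd + 3 * A * \<rho> * \<tau>^2 / Dd^2
     - 4 * \<rho> * (- 2 * A * \<tau>^3 / Dd^3)
     - 2 * (A * \<tau>^3 / Dd^2) * (A * \<rho> / Dd - m * \<rho> / (2 * pi)) = (A * \<rho> / Dd^3) * B"
    using Dp by (simp add: B_def field_simps eval_nat_numeral)
  have t2: "\<tau>^2 * Dd \<ge> 0" using Dp by simp
  have h1: "((m / pi) * \<tau>) * (\<tau>^2 * Dd) \<le> 1 * (\<tau>^2 * Dd)"
    by (rule mult_right_mono[OF assms(4) t2])
  have t3: "\<tau>^3 \<ge> 0" using assms by simp
  have h2: "A * \<tau>^3 \<ge> 4 * (1 + \<tau>) * \<tau>^3" by (rule mult_right_mono[OF assms(3) t3])
  have "B \<le> (- (Dd^2)) + 4 * \<tau>^2 * Dd - 8 * \<tau>^4"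
    using h1 h2 unfolding B_def by (simp add: algebra_simps eval_nat_numeral)
  also have "\<dots> = 0 - (Dd - 2 * \<tau>^2)^2 - 4 * \<tau>^4" by (simp add: algebra_simps eval_nat_numeral)
  also have "\<dots> \<le> 0"
  proof -
    have "(Dd - 2 * \<tau>^2)^2 \<ge> 0" by simp
    moreover have "\<tau>^4 > 0" using assms by simp
    ultimately show ?thesis by linarith
  qed
  finally have B: "B \<le> 0" .
  have "4 + 4 * \<tau> \<le> A" using assms(3) by (simp add: algebra_simps)
  hence "A > 0" using assms(1) by linarith
  hence "A * \<rho> / Dd^3 \<ge> 0" using Dp assms by simp
  hence "(A * \<rho> / Dd^3) * B \<le> 0" using B by (rule mult_nonneg_nonpos)
  thus ?thesis using eq by (simp add: Dd_def)
qed

lemma main: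
  fixes m e :: real
  assumes m: "m > 8 * pi" and e: "e > 0" "4 * exp e < m / (2 * pi)" "(m / pi) * e \<le> 1"
  shows "let \<tau> = (\<lambda>t::real. e - 1 * t);
         a = (\<lambda>t. 4 * exp (\<tau> t));
         M = (\<lambda>\<rho> t. a t * \<rho> / (\<rho> + (\<tau> t) ^ 3));
         T = e / 1
     in bdd_above ((\<lambda>t. M 1 t) ` {0<..<T})
        \<and> (SUP t\<in>{0<..<T}. M 1 t) < m / (2 * pi)
        \<and> (\<forall>t\<in>{0..<T}. bdd_below ((\<lambda>\<rho>. deriv (\<lambda>r. M r t) \<rho>) ` {0<..<1})
               \<and> (INF \<rho>\<in>{0<..<1}. deriv (\<lambda>r. M r t) \<rho>) > 0)
        \<and> (\<forall>\<rho>\<in>{0<..<1}. \<forall>t\<in>{0<..<T}. Theta m M \<rho> t \<le> 0)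
        \<and> (\<forall>t\<in>{0<..<T}. M 0 t = 0)
        \<and> (\<forall>\<rho>\<in>{0<..1}. ((\<lambda>t. M \<rho> t) \<longlongrightarrow> 4) (at_left T))"
proof -
  have mpos: "m > 0" using m pi_gt_zero by linarith
  have bnd: "4 * exp (e - 1 * t) * 1 / (1 + (e - 1 * t) ^ 3) \<le> 4 * exp e" if "t \<in> {0<..<e/1}" for t
  proof -
    have tp: "e - t > 0" using that by simp
    have p3: "(e - t)^3 > 0" using tp by simp
    have p4: "1 + (e - t)^3 > 0" using p3 by linarith
    have "4 * exp (e - t) / (1 + (e - t) ^ 3) \<le> 4 * exp (e - t) / 1"
      using p3 p4 by (intro divide_left_mono) auto
    also have "\<dots> \<le> 4 * exp e" using that by simp
    finally show ?thesis by simp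
  qed
  have F1: "bdd_above ((\<lambda>t. 4 * exp (e - 1 * t) * 1 / (1 + (e - 1 * t) ^ 3)) ` {0<..<e/1})"
    using bnd by (intro bdd_aboveI2) auto
  have F2: "(SUP t\<in>{0<..<e/1}. 4 * exp (e - 1 * t) * 1 / (1 + (e - 1 * t) ^ 3)) < m / (2 * pi)"
  proof -
    have "(SUP t\<in>{0<..<e/1}. 4 * exp (e - 1 * t) * 1 / (1 + (e - 1 * t) ^ 3)) \<le> 4 * exp e"
      using bnd e by (intro cSUP_least) auto
    thus ?thesis using e by linarith
  qed
  have dM: "deriv (\<lambda>r. 4 * exp (e - 1 * t) * r / (r + (e - 1 * t) ^ 3)) r
       = 4 * exp (e - 1 * t) * (e - 1 * t) ^ 3 / (r + (e - 1 * t) ^ 3)^2"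
    if "r + (e - 1 * t) ^ 3 \<noteq> 0" for r t
    by (rule DERIV_imp_deriv[OF dr1[OF that]])
  have F3: "\<forall>t\<in>{0..<e/1}. bdd_below ((\<lambda>\<rho>. deriv (\<lambda>r. 4 * exp (e - 1 * t) * r / (r + (e - 1 * t) ^ 3)) \<rho>) ` {0<..<1})
               \<and> (INF \<rho>\<in>{0<..<1}. deriv (\<lambda>r. 4 * exp (e - 1 * t) * r / (r + (e - 1 * t) ^ 3)) \<rho>) > 0"
  proof
    fix t assume t: "t \<in> {0..<e/1}"
    define c where "c = (e - 1 * t) ^ 3"
    define A where "A = 4 * exp (e - 1 * t)"
    have cp: "c > 0" using t by (simp add: c_def)
    have Ap: "A > 0" by (simp add: A_def)
    have lb: "A * c / (1 + c)^2 \<le> deriv (\<lambda>r. 4 * exp (e - 1 * t) * r / (r + (e - 1 * t) ^ 3)) \<rho>"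
      if "\<rho> \<in> {0<..<1}" for \<rho>
    proof -
      have "\<rho> + c \<noteq> 0" using that cp by simp
      hence d: "deriv (\<lambda>r. 4 * exp (e - 1 * t) * r / (r + (e - 1 * t) ^ 3)) \<rho> = A * c / (\<rho> + c)^2"
        using dM[of \<rho> t] by (simp add: A_def c_def)
      have "(\<rho> + c)^2 \<le> (1 + c)^2" using that cp by (intro power_mono) auto
      moreover have "0 < (\<rho> + c)^2 * (1 + c)^2" using that cp by simp
      ultimately have "A * c / (1 + c)^2 \<le> A * c / (\<rho> + c)^2"
        using Ap cp by (intro divide_left_mono) (auto simp: mult.commute)
      thus ?thesis using d by simp
    qed
    have pos: "A * c / (1 + c)^2 > 0" using Ap cp by simp
    show "bdd_below ((\<lambda>\<rho>. deriv (\<lambda>r. 4 * exp (e - 1 * t) * r / (r + (e - 1 * t) ^ 3)) \<rho>) ` {0<..<1})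
               \<and> (INF \<rho>\<in>{0<..<1}. deriv (\<lambda>r. 4 * exp (e - 1 * t) * r / (r + (e - 1 * t) ^ 3)) \<rho>) > 0"
    proof
      show "bdd_below ((\<lambda>\<rho>. deriv (\<lambda>r. 4 * exp (e - 1 * t) * r / (r + (e - 1 * t) ^ 3)) \<rho>) ` {0<..<1})"
        using lb by (intro bdd_belowI2) auto
      have "A * c / (1 + c)^2 \<le> (INF \<rho>\<in>{0<..<1}. deriv (\<lambda>r. 4 * exp (e - 1 * t) * r / (r + (e - 1 * t) ^ 3)) \<rho>)"
        using lb by (intro cINF_greatest) auto
      thus "(INF \<rho>\<in>{0<..<1}. deriv (\<lambda>r. 4 * exp (e - 1 * t) * r / (r + (e - 1 * t) ^ 3)) \<rho>) > 0"
        using pos by linarith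
    qed
  qed
  have F4: "\<forall>\<rho>\<in>{0<..<1}. \<forall>t\<in>{0<..<e/1}. Theta m (\<lambda>\<rho> t. 4 * exp (e - 1 * t) * \<rho> / (\<rho> + (e - 1 * t) ^ 3)) \<rho> t \<le> 0"
  proof (intro ballI)
    fix \<rho> t :: real assume r: "\<rho> \<in> {0<..<1}" and t: "t \<in> {0<..<e/1}"
    define \<tau> where "\<tau> = e - t"
    have tp: "\<tau> > 0" using t by (simp add: \<tau>_def)
    have te: "\<tau> \<le> e" using t by (simp add: \<tau>_def)
    have rp: "\<rho> > 0" using r by simp
    define A where "A = 4 * exp (e - 1 * t)"
    define c where "c = (e - 1 * t) ^ 3"
    have cp: "c > 0" using tp by (simp add: c_def \<tau>_def)
    have "\<rho> + c > 0" using rp cp by linarith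
    hence Dn: "\<rho> + (e - 1 * t)^3 \<noteq> 0" by (simp add: c_def)
    have d1: "deriv (\<lambda>s. 4 * exp (e - 1 * s) * \<rho> / (\<rho> + (e - 1 * s)^3)) t =
       - (4 * exp (e - t)) * \<rho> / (\<rho> + (e - t)^3)
     + 3 * (4 * exp (e - t)) * \<rho> * (e - t)^2 / (\<rho> + (e - t)^3)^2"
      by (rule DERIV_imp_deriv[OF dt[OF Dn]])
    have d2: "deriv (\<lambda>r. 4 * exp (e - 1 * t) * r / (r + (e - 1 * t) ^ 3)) \<rho> = A * c / (\<rho> + c)^2"
      using dM[OF Dn] by (simp add: A_def c_def)
    have ev: "eventually (\<lambda>r. deriv (\<lambda>q. 4 * exp (e - 1 * t) * q / (q + (e - 1 * t) ^ 3)) r = A * c / (r + c)^2) (nhds \<rho>)"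
    proof -
      have "eventually (\<lambda>r. r \<in> {-c<..}) (nhds \<rho>)"
        using rp cp by (intro eventually_nhds_in_open) auto
      thus ?thesis
      proof (rule eventually_mono)
        fix r assume "r \<in> {-c<..}"
        hence "r + (e - 1 * t)^3 \<noteq> 0" by (auto simp: c_def)
        thus "deriv (\<lambda>q. 4 * exp (e - 1 * t) * q / (q + (e - 1 * t) ^ 3)) r = A * c / (r + c)^2"
          using dM by (simp add: A_def c_def)
      qed
    qed
    have d3: "deriv (\<lambda>r. deriv (\<lambda>q. 4 * exp (e - 1 * t) * q / (q + (e - 1 * t) ^ 3)) r) \<rho>
       = - 2 * A * c / (\<rho> + c)^3"
    proof -
      have "deriv (\<lambda>r. deriv (\<lambda>q. 4 * exp (e - 1 * t) * q / (q + (e - 1 * t) ^ 3)) r) \<rho>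
          = deriv (\<lambda>r. A * c / (r + c)^2) \<rho>"
        by (rule deriv_cong_ev[OF ev refl])
      also have "\<dots> = - 2 * A * c / (\<rho> + c)^3"
        using Dn by (intro DERIV_imp_deriv dr2) (simp add: c_def)
      finally show ?thesis .
    qed
    have "1 + \<tau> \<le> exp \<tau>" by (rule exp_ge_add_one_self)
    hence "4 + 4 * \<tau> \<le> 4 * exp \<tau>" by linarith
    hence A: "A \<ge> 4 * (1 + \<tau>)" by (simp add: A_def \<tau>_def algebra_simps)
    have mt: "(m / pi) * \<tau> \<le> 1"
    proof -
      have "(m / pi) * \<tau> \<le> (m / pi) * e" using te mpos by (intro mult_left_mono) auto
      thus ?thesis using e by linarith
    qed
    have "Theta m (\<lambda>\<rho> t. 4 * exp (e - 1 * t) * \<rho> / (\<rho> + (e - 1 * t) ^ 3)) \<rho> t =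
      - A * \<rho> / (\<rho> + \<tau>^3) + 3 * A * \<rho> * \<tau>^2 / (\<rho> + \<tau>^3)^2
     - 4 * \<rho> * (- 2 * A * \<tau>^3 / (\<rho> + \<tau>^3)^3)
     - 2 * (A * \<tau>^3 / (\<rho> + \<tau>^3)^2) * (A * \<rho> / (\<rho> + \<tau>^3) - m * \<rho> / (2 * pi))"
      unfolding Theta_def d1 d2 d3 by (simp add: A_def c_def \<tau>_def)
    also have "\<dots> \<le> 0" by (rule alg[OF tp rp A mt])
    finally show "Theta m (\<lambda>\<rho> t. 4 * exp (e - 1 * t) * \<rho> / (\<rho> + (e - 1 * t) ^ 3)) \<rho> t \<le> 0" .
  qed
  have F5: "\<forall>t\<in>{0<..<e/1}. 4 * exp (e - 1 * t) * 0 / (0 + (e - 1 * t) ^ 3) = 0" by simp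
  have F6: "\<forall>\<rho>\<in>{0<..1}. ((\<lambda>t. 4 * exp (e - 1 * t) * \<rho> / (\<rho> + (e - 1 * t) ^ 3)) \<longlongrightarrow> 4) (at_left (e/1))"
  proof
    fix \<rho> :: real assume r: "\<rho> \<in> {0<..1}"
    have "((\<lambda>t. 4 * exp (e - 1 * t) * \<rho> / (\<rho> + (e - 1 * t) ^ 3)) \<longlongrightarrow>
        4 * exp (e - 1 * e) * \<rho> / (\<rho> + (e - 1 * e) ^ 3)) (at e)"
      using r by (intro tendsto_intros) auto
    hence "((\<lambda>t. 4 * exp (e - 1 * t) * \<rho> / (\<rho> + (e - 1 * t) ^ 3)) \<longlongrightarrow> 4) (at e)"
      using r by simp
    thus "((\<lambda>t. 4 * exp (e - 1 * t) * \<rho> / (\<rho> + (e - 1 * t) ^ 3)) \<longlongrightarrow> 4) (at_left (e/1))"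
      by (simp add: filterlim_at_split)
  qed
  show ?thesis unfolding Let_def
    using F1 F2 F3 F4 F5 F6 by (intro conjI)
qed

theorem lemma2p1:
  fixes m :: real
  assumes "m > 8 * pi"
  shows "\<exists>\<epsilon>>0. \<exists>l>0.
    (let \<tau> = (\<lambda>t::real. \<epsilon> - l * t);
         a = (\<lambda>t. 4 * exp (\<tau> t));
         M = (\<lambda>\<rho> t. a t * \<rho> / (\<rho> + (\<tau> t) ^ 3));
         T = \<epsilon> / l
     in bdd_above ((\<lambda>t. M 1 t) ` {0<..<T})
        \<and> (SUP t\<in>{0<..<T}. M 1 t) < m / (2 * pi)
        \<and> (\<forall>t\<in>{0..<T}. bdd_below ((\<lambda>\<rho>. deriv (\<lambda>r. M r t) \<rho>) ` {0<..<1})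
               \<and> (INF \<rho>\<in>{0<..<1}. deriv (\<lambda>r. M r t) \<rho>) > 0)
        \<and> (\<forall>\<rho>\<in>{0<..<1}. \<forall>t\<in>{0<..<T}. Theta m M \<rho> t \<le> 0)
        \<and> (\<forall>t\<in>{0<..<T}. M 0 t = 0)
        \<and> (\<forall>\<rho>\<in>{0<..1}. ((\<lambda>t. M \<rho> t) \<longlongrightarrow> 4) (at_left T)))"
proof -
  have pp: "pi > 0" by (rule pi_gt_zero)
  have mpos: "m > 0" using assms pp by linarith
  define q where "q = m / (8 * pi)"
  have q1: "q > 1" using assms pp by (simp add: q_def field_simps)
  have lq: "ln q > 0" using q1 by simp
  define e where "e = min (pi / m) (ln q / 2)"
  have ep: "e > 0" using pp mpos lq by (simp add: e_def)
  have "e \<le> ln q / 2" unfolding e_def by (rule min.cobounded2)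
  hence "exp e \<le> exp (ln q / 2)" by simp
  also have "\<dots> < exp (ln q)" using lq by simp
  also have "\<dots> = q" using q1 by simp
  finally have "4 * exp e < 4 * q" by simp
  hence e2: "4 * exp e < m / (2 * pi)" unfolding q_def using pp by (simp add: field_simps)
  have "(m / pi) * e \<le> (m / pi) * (pi / m)"
    using mpos pp by (intro mult_left_mono) (auto simp: e_def)
  hence e3: "(m / pi) * e \<le> 1" using mpos pp by simp
  show ?thesis
    by (intro exI[of _ e] conjI ep exI[of _ 1] zero_less_one main[OF assms ep e2 e3])
qed

end
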